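(* Let $G=\varinjlim(\mathbb Z^{n+1},A^{(n)})$ be the inductive limit (the $K_0$-group of the GICAR algebra), where $A^{(n)}:\mathbb Z^{n+1}\to\mathbb Z^{n+2}$ is given by $(A^{(n)}v)_i=v_{i-1}+v_i$ (with $v_0=v_{n+2}=0$), with positive cone $G^+$ the union of the images of $\mathbb Z_{\ge0}^{n+1}$ and order unit $u$ the image of $(\binom n0,\binom n1,\dots,\binom nn)\in\mathbb Z^{n+1}$ (for any $n$). Let $\mathbb Z^{(\infty)}$ be the group of integer sequences $(\beta_1,\beta_2,\dots)$ that are eventually $0$, with $\mathbb Z^{n+1}$ identified with the sequences supported in the first $n+1$ coordinates. Define $\Phi_n:\mathbb Z^{n+1}\to\mathbb Z^{(\infty)}$ by $\Phi_n(v)=A_nv$. Then: (a) $\Phi_{n+1}\circ A^{(n)}=\Phi_n$ for all $n\ge1$, and the induced map $G\to\mathbb Z^{(\infty)}$ is a group isomorphism; (b) it maps $u$ to $e_1=(1,0,0,\dots)$; (c) it maps $G^+$ onto $\bigcup_{n\ge1}P_n^+$, where $P_n^+$ is the set of $\beta\in\mathbb Z^{(\infty)}$ supported in the first $n+1$ coordinates such that $\sum_{l=0}^{k}\binom{n-l}{k-l}\beta_{l+1}\ge0$ for all $0\le k\le n$.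
   Context: For $k\ge0$, $A_{k,k+1}\in M_{k+2}(\mathbb Z)$ is the lower bidiagonal matrix with all diagonal entries $1$, all subdiagonal entries $(i+1,i)$ equal to $1$, and all other entries $0$; for $n\ge1$, $A_n=[A_{0,1}^{-1}\oplus I_{n-1}][A_{1,2}^{-1}\oplus I_{n-2}]\cdots[A_{n-2,n-1}^{-1}\oplus I_1]A_{n-1,n}^{-1}\in M_{n+1}(\mathbb Z)$, where $I_m$ is the $m\times m$ identity and $\oplus$ is block-diagonal sum. (In the paper $\mathbb Z^{(\infty)}$ appears as $C(X_{min},\mathbb Z)$, with $\beta$ corresponding to $\sum_r\beta_r\chi_{B(r,r-1)\cap X_{min}}$.) *)

theory Defs
  imports "Jordan_Normal_Form.Matrix"
begin

text \<open>Conventions: coordinates are 0-indexed. The paper's coordinate i (1-based)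
  corresponds to index i-1 here. Z^{n+1} = int vectors of dimension n+1.\<close>

definition Abidiag :: "nat \<Rightarrow> int mat" where
  "Abidiag k = mat (k+2) (k+2) (\<lambda>(i,j). if i = j \<or> i = j + 1 then 1 else 0)"

definition int_mat_inv :: "int mat \<Rightarrow> int mat" where
  "int_mat_inv A = (SOME B. B \<in> carrier_mat (dim_row A) (dim_row A) \<and>
      A * B = 1\<^sub>m (dim_row A) \<and> B * A = 1\<^sub>m (dim_row A))"

definition oplus_id :: "int mat \<Rightarrow> nat \<Rightarrow> int mat" where
  "oplus_id M m = four_block_mat M (0\<^sub>m (dim_row M) m) (0\<^sub>m m (dim_col M)) (1\<^sub>m m)"

text \<open>A_n = [A_{0,1}^{-1} \<oplus> I_{n-1}] ... [A_{n-2,n-1}^{-1} \<oplus> I_1] A_{n-1,n}^{-1}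
  (the last factor is A_{n-1,n}^{-1} \<oplus> I_0), an (n+1)x(n+1) matrix, n \<ge> 1.\<close>
definition Amat :: "nat \<Rightarrow> int mat" where
  "Amat n = foldr (\<lambda>k M. oplus_id (int_mat_inv (Abidiag k)) (n - 1 - k) * M) [0..<n] (1\<^sub>m (n+1))"

definition Aconn :: "nat \<Rightarrow> int mat" where
  "Aconn n = mat (n+2) (n+1) (\<lambda>(i,j). if i = j \<or> i = j + 1 then 1 else 0)"

definition Zinf :: "(nat \<Rightarrow> int) set" where
  "Zinf = {\<beta>. finite {i. \<beta> i \<noteq> 0}}"

definition vec_to_seq :: "int vec \<Rightarrow> nat \<Rightarrow> int" where
  "vec_to_seq v = (\<lambda>i. if i < dim_vec v then v $ i else 0)"

definition Phi :: "nat \<Rightarrow> int vec \<Rightarrow> nat \<Rightarrow> int" where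
  "Phi n v = vec_to_seq (Amat n *\<^sub>v v)"

definition push :: "nat \<Rightarrow> nat \<Rightarrow> int vec \<Rightarrow> int vec" where
  "push n m v = foldl (\<lambda>w j. Aconn j *\<^sub>v w) v [n..<m]"

definition Glevels :: "(nat \<times> int vec) set" where
  "Glevels = {(n, v). n \<ge> 1 \<and> v \<in> carrier_vec (n+1)}"

definition Grel :: "((nat \<times> int vec) \<times> (nat \<times> int vec)) set" where
  "Grel = {((n, v), (m, w)). (n, v) \<in> Glevels \<and> (m, w) \<in> Glevels \<and>
             (\<exists>k \<ge> max n m. push n k v = push m k w)}"

definition Gcarrier :: "(nat \<times> int vec) set set" where
  "Gcarrier = Glevels // Grel"

definition Gcls :: "nat \<Rightarrow> int vec \<Rightarrow> (nat \<times> int vec) set" where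
  "Gcls n v = Grel `` {(n, v)}"

definition Gadd :: "(nat \<times> int vec) set \<Rightarrow> (nat \<times> int vec) set \<Rightarrow> (nat \<times> int vec) set" where
  "Gadd x y = (let (n, v) = (SOME p. p \<in> x); (m, w) = (SOME p. p \<in> y); k = max n m
               in Gcls k (push n k v + push m k w))"

definition Gpos :: "(nat \<times> int vec) set set" where
  "Gpos = {Gcls n v | n v. n \<ge> 1 \<and> v \<in> carrier_vec (n+1) \<and> (\<forall>i < n+1. v $ i \<ge> 0)}"

definition binom_vec :: "nat \<Rightarrow> int vec" where
  "binom_vec n = vec (n+1) (\<lambda>i. int (n choose i))"

definition Phi_lim :: "(nat \<times> int vec) set \<Rightarrow> nat \<Rightarrow> int" where
  "Phi_lim x = (THE \<beta>. \<forall>(n, v) \<in> x. Phi n v = \<beta>)"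

definition e1 :: "nat \<Rightarrow> int" where
  "e1 = (\<lambda>i. if i = 0 then 1 else 0)"

definition Ppos :: "nat \<Rightarrow> (nat \<Rightarrow> int) set" where
  "Ppos n = {\<beta>. (\<forall>i > n. \<beta> i = 0) \<and>
     (\<forall>k \<le> n. (\<Sum>l = 0..k. int ((n - l) choose (k - l)) * \<beta> l) \<ge> 0)}"

end

theory Submission imports Defs begin

lemma bidiag_row_sum:
  fixes f :: "nat \<Rightarrow> int"
  shows "(\<Sum>j\<in>{0..<d}. (if i = j \<or> i = j + 1 then 1 else 0) * f j) =
    (if i < d then f i else 0) + (if 1 \<le> i \<and> i - 1 < d then f (i - 1) else 0)"
proof -
  have "(\<Sum>j\<in>{0..<d}. (if i = j \<or> i = j + 1 then 1 else 0) * f j) =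
     (\<Sum>j\<in>{0..<d}. (if i = j then f j else 0) + (if i - 1 = j then (if 1 \<le> i then f j else 0) else 0))"
    by (rule sum.cong) auto
  also have "\<dots> = (if i < d then f i else 0) + (if 1 \<le> i \<and> i - 1 < d then f (i - 1) else 0)"
    by (simp only: sum.distrib sum.delta) auto
  finally show ?thesis .
qed

lemma bidiag_col_sum:
  fixes f :: "nat \<Rightarrow> int"
  shows "(\<Sum>j\<in>{0..<d}. f j * (if j = l \<or> j = l + 1 then 1 else 0)) =
    (if l < d then f l else 0) + (if l + 1 < d then f (l + 1) else 0)"
proof -
  have "(\<Sum>j\<in>{0..<d}. f j * (if j = l \<or> j = l + 1 then 1 else 0)) =
     (\<Sum>j\<in>{0..<d}. (if l = j then f j else 0) + (if l + 1 = j then f j else 0))"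
    by (rule sum.cong) auto
  also have "\<dots> = (if l < d then f l else 0) + (if l + 1 < d then f (l + 1) else 0)"
    by (simp only: sum.distrib sum.delta) auto
  finally show ?thesis .
qed

lemma bidiag_row_sum':
  fixes f :: "nat \<Rightarrow> int"
  shows "(\<Sum>j = 0..<d. (if i = j \<or> i = Suc j then 1 else 0) * f j) =
    (if i < d then f i else 0) + (if 1 \<le> i \<and> i - 1 < d then f (i - 1) else 0)"
  using bidiag_row_sum[where f=f and i=i and d=d] by simp

lemma bidiag_col_sum':
  fixes f :: "nat \<Rightarrow> int"
  shows "(\<Sum>j = 0..<d. f j * (if j = l \<or> j = Suc l then 1 else 0)) =
    (if l < d then f l else 0) + (if Suc l < d then f (Suc l) else 0)"
  using bidiag_col_sum[where f=f and l=l and d=d] by simp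

definition Wmat :: "nat \<Rightarrow> int mat" where
  "Wmat k = mat (k+2) (k+2) (\<lambda>(i,j). if j \<le> i then (-1)^(i-j) else 0)"

lemma Abidiag_carrier[simp]: "Abidiag k \<in> carrier_mat (k+2) (k+2)"
  by (simp add: Abidiag_def)
lemma Wmat_carrier[simp]: "Wmat k \<in> carrier_mat (k+2) (k+2)"
  by (simp add: Wmat_def)

lemma neg1_pow_cancel: "j < i \<Longrightarrow> (-1::int)^(i-j) + (-1)^(i - Suc j) = 0"
proof -
  assume "j < i"
  then have "i - j = Suc (i - Suc j)" by simp
  then show ?thesis by simp
qed

lemma Ab_W: "Abidiag k * Wmat k = 1\<^sub>m (k+2)"
proof (rule eq_matI)
  fix i l assume i: "i < dim_row (1\<^sub>m (k+2))" and l: "l < dim_col (1\<^sub>m (k+2))"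
  have "(Abidiag k * Wmat k) $$ (i,l) = (\<Sum>j = 0..<k+2. (if i = j \<or> i = Suc j then 1 else 0) * (if l \<le> j then (-1)^(j-l) else 0))"
    using i l by (simp add: Abidiag_def Wmat_def scalar_prod_def row_def col_def)
  also have "\<dots> = 1\<^sub>m (k+2) $$ (i,l)"
    unfolding bidiag_row_sum' using i l neg1_pow_cancel[of l i] by auto
  finally show "(Abidiag k * Wmat k) $$ (i,l) = 1\<^sub>m (k+2) $$ (i,l)" .
qed (auto simp: Abidiag_def Wmat_def)

lemma W_Ab: "Wmat k * Abidiag k = 1\<^sub>m (k+2)"
proof (rule eq_matI)
  fix i l assume i: "i < dim_row (1\<^sub>m (k+2))" and l: "l < dim_col (1\<^sub>m (k+2))"
  have "(Wmat k * Abidiag k) $$ (i,l) = (\<Sum>j = 0..<k+2. (if j \<le> i then (-1)^(i-j) else 0) * (if j = l \<or> j = Suc l then 1 else 0))"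
    using i l by (simp add: Abidiag_def Wmat_def scalar_prod_def row_def col_def)
  also have "\<dots> = 1\<^sub>m (k+2) $$ (i,l)"
    unfolding bidiag_col_sum' using i l neg1_pow_cancel[of l i] by auto
  finally show "(Wmat k * Abidiag k) $$ (i,l) = 1\<^sub>m (k+2) $$ (i,l)" .
qed (auto simp: Abidiag_def Wmat_def)

definition Inv :: "nat \<Rightarrow> int mat" where "Inv k = int_mat_inv (Abidiag k)"

lemma Inv_props: "Inv k \<in> carrier_mat (k+2) (k+2) \<and> Abidiag k * Inv k = 1\<^sub>m (k+2) \<and> Inv k * Abidiag k = 1\<^sub>m (k+2)"
proof -
  have d: "dim_row (Abidiag k) = k+2" by (simp add: Abidiag_def)
  show ?thesis unfolding Inv_def int_mat_inv_def d
    by (rule someI[of _ "Wmat k"]) (use Ab_W[of k] W_Ab[of k] Wmat_carrier[of k] in simp)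
qed

lemma Inv_carrier[simp]: "Inv k \<in> carrier_mat (k+2) (k+2)" using Inv_props by blast
lemma Ab_Inv: "Abidiag k * Inv k = 1\<^sub>m (k+2)" using Inv_props by blast
lemma Inv_Ab: "Inv k * Abidiag k = 1\<^sub>m (k+2)" using Inv_props by blast



lemma oplus_carrier[simp]: "M \<in> carrier_mat d d \<Longrightarrow> oplus_id M m \<in> carrier_mat (d+m) (d+m)"
  unfolding oplus_id_def by (rule four_block_carrier_mat) auto

lemma oplus_dims[simp]: "dim_row (oplus_id M m) = dim_row M + m" "dim_col (oplus_id M m) = dim_col M + m"
  unfolding oplus_id_def by auto

lemma oplus_index: "M \<in> carrier_mat d d \<Longrightarrow> i < d + m \<Longrightarrow> j < d + m \<Longrightarrow>
  oplus_id M m $$ (i,j) = (if i < d \<and> j < d then M $$ (i,j) else if i = j then 1 else 0)"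
  unfolding oplus_id_def by auto

lemma oplus_zero: "M \<in> carrier_mat d d \<Longrightarrow> oplus_id M 0 = M"
  by (rule eq_matI) (auto simp: oplus_index)

lemma oplus_oplus: "M \<in> carrier_mat d d \<Longrightarrow> oplus_id (oplus_id M a) 1 = oplus_id M (a+1)"
proof (rule eq_matI)
  fix i j assume M: "M \<in> carrier_mat d d" and i: "i < dim_row (oplus_id M (a + 1))" and j: "j < dim_col (oplus_id M (a + 1))"
  have c: "oplus_id M a \<in> carrier_mat (d+a) (d+a)" using M by simp
  show "oplus_id (oplus_id M a) 1 $$ (i, j) = oplus_id M (a + 1) $$ (i, j)"
    using i j M by (simp add: oplus_index[OF c] oplus_index[OF M])
qed auto

lemma oplus_mult: "P \<in> carrier_mat d d \<Longrightarrow> Q \<in> carrier_mat d d \<Longrightarrow>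
   oplus_id P 1 * oplus_id Q 1 = oplus_id (P * Q) 1"
proof -
  assume P: "P \<in> carrier_mat d d" and Q: "Q \<in> carrier_mat d d"
  have z1: "0\<^sub>m d 1 \<in> carrier_mat d 1" and z2: "0\<^sub>m 1 d \<in> carrier_mat 1 d" and o: "(1\<^sub>m 1 :: int mat) \<in> carrier_mat 1 1" by auto
  have PQ: "P * Q \<in> carrier_mat d d" using P Q by simp
  show ?thesis unfolding oplus_id_def carrier_matD[OF P] carrier_matD[OF Q] carrier_matD[OF PQ]
      mult_four_block_mat[OF P z1 z2 o Q z1 z2 o]
    using P Q by simp
qed

lemma oplus_mult': "P \<in> carrier_mat d d \<Longrightarrow> Q \<in> carrier_mat d d \<Longrightarrow>
   oplus_id P (Suc 0) * oplus_id Q (Suc 0) = oplus_id (P * Q) (Suc 0)"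
  using oplus_mult by simp

lemma oplus_one: "oplus_id (1\<^sub>m d) a = 1\<^sub>m (d + a)"
  unfolding oplus_id_def by simp

lemma foldr_mult_carrier:
  fixes F :: "nat \<Rightarrow> int mat"
  assumes "\<forall>k\<in>set xs. F k \<in> carrier_mat d d"
  shows "foldr (\<lambda>k M. F k * M) xs (1\<^sub>m d) \<in> carrier_mat d d"
  using assms by (induction xs) auto

lemma foldr_mult:
  fixes F :: "nat \<Rightarrow> int mat"
  assumes "\<forall>k\<in>set xs. F k \<in> carrier_mat d d" and N: "N \<in> carrier_mat d c"
  shows "foldr (\<lambda>k M. F k * M) xs N = foldr (\<lambda>k M. F k * M) xs (1\<^sub>m d) * N"
  using assms
proof (induction xs)
  case Nil then show ?case using left_mult_one_mat[of N d c] by simp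
next
  case (Cons a xs)
  have c: "foldr (\<lambda>k M. F k * M) xs (1\<^sub>m d) \<in> carrier_mat d d"
    using Cons.prems by (intro foldr_mult_carrier) auto
  have Fa: "F a \<in> carrier_mat d d" using Cons.prems by auto
  then show ?case using Cons c assoc_mult_mat[OF Fa c Cons.prems(2)] by simp
qed

lemma Amat_alt: "Amat n = foldr (\<lambda>k M. oplus_id (Inv k) (n - 1 - k) * M) [0..<n] (1\<^sub>m (n+1))"
  unfolding Amat_def Inv_def by simp

lemma Amat_factor_carrier: "k < n \<Longrightarrow> oplus_id (Inv k) (n - 1 - k) \<in> carrier_mat (n+1) (n+1)"
  using oplus_carrier[OF Inv_carrier[of k], of "n - 1 - k"] by simp

lemma Amat_factor_carrier'[simp]: "k < n \<Longrightarrow> oplus_id (Inv k) (n - Suc k) \<in> carrier_mat (Suc n) (Suc n)"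
  using Amat_factor_carrier by simp

lemma Inv_dims[simp]: "dim_row (Inv k) = k+2" "dim_col (Inv k) = k+2"
  using Inv_carrier[of k] by auto

lemma Amat_carrier[simp]: "Amat n \<in> carrier_mat (n+1) (n+1)"
  unfolding Amat_alt by (rule foldr_mult_carrier) (auto simp: Amat_factor_carrier)

lemma lift_foldr:
  assumes "\<forall>k\<in>set xs. k < n"
  shows "foldr (\<lambda>k M. oplus_id (Inv k) (n - k) * M) xs (1\<^sub>m (n+2))
       = oplus_id (foldr (\<lambda>k M. oplus_id (Inv k) (n - 1 - k) * M) xs (1\<^sub>m (n+1))) 1"
  using assms
proof (induction xs)
  case Nil then show ?case using oplus_one[of "n+1" 1] by simp
next
  case (Cons a xs)
  have a: "a < n" using Cons.prems by auto
  have c: "foldr (\<lambda>k M. oplus_id (Inv k) (n - Suc k) * M) xs (1\<^sub>m (Suc n)) \<in> carrier_mat (Suc n) (Suc n)"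
    using Cons.prems by (intro foldr_mult_carrier) (auto simp: Amat_factor_carrier)
  have e: "oplus_id (Inv a) (n - a) = oplus_id (oplus_id (Inv a) (n - 1 - a)) 1"
    using oplus_oplus[OF Inv_carrier[of a], of "n - 1 - a"] a by (simp add: Suc_diff_Suc)
  show ?case using Cons c a
    by (simp add: e oplus_mult'[OF Amat_factor_carrier'[OF a] c])
qed

lemma Amat_Suc: "Amat (Suc n) = oplus_id (Amat n) 1 * Inv n"
proof -
  have "Amat (Suc n) = foldr (\<lambda>k M. oplus_id (Inv k) (n - k) * M) [0..<n] (oplus_id (Inv n) 0 * 1\<^sub>m (n+2))"
    unfolding Amat_alt by simp
  also have "oplus_id (Inv n) 0 * 1\<^sub>m (n+2) = Inv n"
    using oplus_zero[OF Inv_carrier[of n]] by simp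
  also have "foldr (\<lambda>k M. oplus_id (Inv k) (n - k) * M) [0..<n] (Inv n)
     = foldr (\<lambda>k M. oplus_id (Inv k) (n - k) * M) [0..<n] (1\<^sub>m (n+2)) * Inv n"
  proof (rule foldr_mult)
    show "\<forall>k\<in>set [0..<n]. oplus_id (Inv k) (n - k) \<in> carrier_mat (n+2) (n+2)"
    proof
      fix k assume "k \<in> set [0..<n]"
      then have k: "k < n" by simp
      have "oplus_id (Inv k) (n - k) \<in> carrier_mat (k + 2 + (n - k)) (k + 2 + (n - k))"
        by (rule oplus_carrier[OF Inv_carrier])
      moreover have "k + 2 + (n - k) = n + 2" using k by simp
      ultimately show "oplus_id (Inv k) (n - k) \<in> carrier_mat (n+2) (n+2)" by simp
    qed
  qed (rule Inv_carrier)
  also have "foldr (\<lambda>k M. oplus_id (Inv k) (n - k) * M) [0..<n] (1\<^sub>m (n+2)) = oplus_id (Amat n) 1"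
    unfolding Amat_alt by (rule lift_foldr) auto
  finally show ?thesis .
qed


definition Bm :: "nat \<Rightarrow> int mat" where
  "Bm n = mat (n+1) (n+1) (\<lambda>(k,l). if l \<le> k then int ((n - l) choose (k - l)) else 0)"

lemma Bm_carrier[simp]: "Bm n \<in> carrier_mat (n+1) (n+1)" by (simp add: Bm_def)
lemma Bm_dims[simp]: "dim_row (Bm n) = n+1" "dim_col (Bm n) = n+1" by (simp_all add: Bm_def)
lemma Amat_dims[simp]: "dim_row (Amat n) = n+1" "dim_col (Amat n) = n+1"
  using Amat_carrier[of n] by (simp_all del: Amat_carrier)

lemma Bm_Suc: "Bm (Suc n) = Abidiag n * oplus_id (Bm n) 1"
proof (rule eq_matI)
  fix k l assume k: "k < dim_row (Abidiag n * oplus_id (Bm n) 1)" and l: "l < dim_col (Abidiag n * oplus_id (Bm n) 1)"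
  then have k: "k < n+2" and l: "l < n+2" by (simp_all add: Abidiag_def)
  define e where "e j = (if j < n+1 \<and> l < n+1 then (if l \<le> j then int ((n - l) choose (j - l)) else 0) else if j = l then 1 else 0)" for j
  have "(Abidiag n * oplus_id (Bm n) 1) $$ (k,l) = (\<Sum>j = 0..<n+2. Abidiag n $$ (k,j) * oplus_id (Bm n) 1 $$ (j,l))"
    using k l by (simp add: scalar_prod_def Abidiag_def)
  also have "\<dots> = (\<Sum>j = 0..<n+2. (if k = j \<or> k = Suc j then 1 else 0) * e j)"
  proof (rule sum.cong)
    fix j assume "j \<in> {0..<n+2}"
    then have j: "j < n+2" by simp
    show "Abidiag n $$ (k,j) * oplus_id (Bm n) 1 $$ (j,l) = (if k = j \<or> k = Suc j then 1 else 0) * e j"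
      using j k l oplus_index[OF Bm_carrier[of n], of j 1 l] unfolding e_def
      by (simp add: Abidiag_def Bm_def)
  qed simp
  also have "\<dots> = e k + (if 1 \<le> k \<and> k - 1 < n+2 then e (k - 1) else 0)"
    using k by (simp only: bidiag_row_sum') simp
  also have "\<dots> = Bm (Suc n) $$ (k,l)"
  proof -
    have rhs: "Bm (Suc n) $$ (k,l) = (if l \<le> k then int ((Suc n - l) choose (k - l)) else 0)"
      using k l by (simp add: Bm_def)
    consider "k < l" | "k = l" | "l < k" by linarith
    then show ?thesis
    proof cases
      case 1 then show ?thesis unfolding rhs e_def using k l by auto
    next
      case 2 then show ?thesis unfolding rhs e_def using k l by auto
    next
      case 3
      show ?thesis
      proof (cases "k = n+1")
        case True
        then show ?thesis unfolding rhs e_def using k l 3 by auto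
      next
        case False
        then have kn: "k < n+1" using k by simp
        have p: "((Suc n - l) choose (k - l)) = ((n - l) choose (k - 1 - l)) + ((n - l) choose (k - l))"
        proof -
          have a: "Suc n - l = Suc (n - l)" using kn 3 by simp
          have b: "k - l = Suc (k - 1 - l)" using 3 by simp
          show ?thesis unfolding a b by simp
        qed
        show ?thesis unfolding rhs e_def using k l 3 kn p by auto
      qed
    qed
  qed
  finally show "Bm (Suc n) $$ (k,l) = (Abidiag n * oplus_id (Bm n) 1) $$ (k,l)" by (rule sym)
qed (auto simp: Abidiag_def)

lemma Bm_0: "Bm 0 = 1\<^sub>m 1"
  by (rule eq_matI) (auto simp: Bm_def)

lemma Amat_0: "Amat 0 = 1\<^sub>m 1"
  by (simp add: Amat_def)

lemma AB_inv: "Amat n * Bm n = 1\<^sub>m (n+1) \<and> Bm n * Amat n = 1\<^sub>m (n+1)"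
proof (induction n)
  case 0 then show ?case by (simp add: Amat_0 Bm_0)
next
  case (Suc n)
  define OA where "OA = oplus_id (Amat n) 1"
  define OB where "OB = oplus_id (Bm n) 1"
  have cA: "OA \<in> carrier_mat (n+2) (n+2)" unfolding OA_def using oplus_carrier[OF Amat_carrier[of n], of 1] by simp
  have cB: "OB \<in> carrier_mat (n+2) (n+2)" unfolding OB_def using oplus_carrier[OF Bm_carrier[of n], of 1] by simp
  have cI: "Inv n \<in> carrier_mat (n+2) (n+2)" by (rule Inv_carrier)
  have cAb: "Abidiag n \<in> carrier_mat (n+2) (n+2)" by (rule Abidiag_carrier)
  have AB: "OA * OB = 1\<^sub>m (n+2)"
    unfolding OA_def OB_def using oplus_mult[OF Amat_carrier Bm_carrier, of n] Suc.IH oplus_one[of "n+1" 1] by simp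
  have BA: "OB * OA = 1\<^sub>m (n+2)"
    unfolding OA_def OB_def using oplus_mult[OF Bm_carrier Amat_carrier, of n] Suc.IH oplus_one[of "n+1" 1] by simp
  have e1: "Amat (Suc n) * Bm (Suc n) = (OA * Inv n) * (Abidiag n * OB)"
    unfolding Amat_Suc Bm_Suc OA_def OB_def ..
  also have "\<dots> = OA * ((Inv n * Abidiag n) * OB)"
    using cA cB cI cAb by (simp add: assoc_mult_mat[of _ "n+2" "n+2" _ "n+2" _ "n+2"])
  also have "\<dots> = 1\<^sub>m (n+2)" using Inv_Ab[of n] AB cB by simp
  finally have r1: "Amat (Suc n) * Bm (Suc n) = 1\<^sub>m (Suc n + 1)" by simp
  have "Bm (Suc n) * Amat (Suc n) = (Abidiag n * OB) * (OA * Inv n)"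
    unfolding Amat_Suc Bm_Suc OA_def OB_def ..
  also have "\<dots> = Abidiag n * ((OB * OA) * Inv n)"
    using cA cB cI cAb by (simp add: assoc_mult_mat[of _ "n+2" "n+2" _ "n+2" _ "n+2"])
  also have "\<dots> = 1\<^sub>m (n+2)" using Ab_Inv[of n] BA cI by simp
  finally have r2: "Bm (Suc n) * Amat (Suc n) = 1\<^sub>m (Suc n + 1)" by simp
  show ?case using r1 r2 by simp
qed

lemma AB: "Amat n * Bm n = 1\<^sub>m (n+1)" and BA: "Bm n * Amat n = 1\<^sub>m (n+1)"
  using AB_inv by auto

lemma BA_vec: "v \<in> carrier_vec (n+1) \<Longrightarrow> Bm n *\<^sub>v (Amat n *\<^sub>v v) = v"
  by (metis Amat_carrier BA Bm_carrier assoc_mult_mat_vec one_mult_mat_vec)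

lemma AB_vec: "v \<in> carrier_vec (n+1) \<Longrightarrow> Amat n *\<^sub>v (Bm n *\<^sub>v v) = v"
  by (metis Amat_carrier AB Bm_carrier assoc_mult_mat_vec one_mult_mat_vec)

lemma Bm_vec_entry:
  assumes k: "k \<le> n" and u: "u \<in> carrier_vec (n+1)"
  shows "(Bm n *\<^sub>v u) $ k = (\<Sum>l = 0..k. int ((n - l) choose (k - l)) * u $ l)"
proof -
  have "(Bm n *\<^sub>v u) $ k = (\<Sum>l = 0..<n+1. Bm n $$ (k,l) * u $ l)"
    using k u by (simp add: scalar_prod_def)
  also have "\<dots> = (\<Sum>l = 0..<n+1. if l \<le> k then int ((n - l) choose (k - l)) * u $ l else 0)"
    by (rule sum.cong) (use k in \<open>auto simp: Bm_def\<close>)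
  also have "\<dots> = (\<Sum>l \<in> {l \<in> {0..<n+1}. l \<le> k}. int ((n - l) choose (k - l)) * u $ l)"
    by (rule sum.inter_filter[symmetric]) simp
  also have "{l \<in> {0..<n+1}. l \<le> k} = {0..k}" using k by auto
  finally show ?thesis .
qed


definition ext0 :: "int vec \<Rightarrow> int vec" where
  "ext0 w = vec (dim_vec w + 1) (\<lambda>i. if i < dim_vec w then w $ i else 0)"

lemma ext0_carrier[simp]: "w \<in> carrier_vec d \<Longrightarrow> ext0 w \<in> carrier_vec (d+1)"
  by (simp add: ext0_def)

lemma vec_to_seq_ext0: "vec_to_seq (ext0 w) = vec_to_seq w"
  by (rule ext) (simp add: vec_to_seq_def ext0_def)

lemma Aconn_ext0:
  assumes v: "v \<in> carrier_vec (n+1)"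
  shows "Aconn n *\<^sub>v v = Abidiag n *\<^sub>v ext0 v"
proof (rule eq_vecI)
  fix i assume "i < dim_vec (Abidiag n *\<^sub>v ext0 v)"
  then have i: "i < n+2" by (simp add: Abidiag_def)
  have "(Abidiag n *\<^sub>v ext0 v) $ i = (\<Sum>j = 0..<Suc (n+1). Abidiag n $$ (i,j) * ext0 v $ j)"
    using i v by (simp add: scalar_prod_def Abidiag_def ext0_def)
  also have "\<dots> = (\<Sum>j = 0..<n+1. Abidiag n $$ (i,j) * ext0 v $ j)"
    using v by (simp add: ext0_def)
  also have "\<dots> = (\<Sum>j = 0..<n+1. Aconn n $$ (i,j) * v $ j)"
    by (rule sum.cong) (use i v in \<open>auto simp: ext0_def Abidiag_def Aconn_def\<close>)
  also have "\<dots> = (Aconn n *\<^sub>v v) $ i"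
    using i v by (simp add: scalar_prod_def Aconn_def)
  finally show "(Aconn n *\<^sub>v v) $ i = (Abidiag n *\<^sub>v ext0 v) $ i" by (rule sym)
qed (use v in \<open>auto simp: Aconn_def Abidiag_def\<close>)

lemma oplus_ext0:
  assumes M: "M \<in> carrier_mat d d" and w: "w \<in> carrier_vec d"
  shows "oplus_id M 1 *\<^sub>v ext0 w = ext0 (M *\<^sub>v w)"
proof (rule eq_vecI)
  fix i assume "i < dim_vec (ext0 (M *\<^sub>v w))"
  then have i: "i < d+1" using M by (simp add: ext0_def)
  have "(oplus_id M 1 *\<^sub>v ext0 w) $ i = (\<Sum>j = 0..<Suc d. oplus_id M 1 $$ (i,j) * ext0 w $ j)"
    using i w M by (simp add: scalar_prod_def ext0_def)
  also have "\<dots> = (\<Sum>j = 0..<d. oplus_id M 1 $$ (i,j) * ext0 w $ j)"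
    using w by (simp add: ext0_def)
  also have "\<dots> = (\<Sum>j = 0..<d. (if i < d then M $$ (i,j) * w $ j else 0))"
    by (rule sum.cong) (use i w M in \<open>auto simp: ext0_def oplus_index[OF M]\<close>)
  also have "\<dots> = ext0 (M *\<^sub>v w) $ i"
    using i w M by (auto simp: scalar_prod_def ext0_def)
  finally show "(oplus_id M 1 *\<^sub>v ext0 w) $ i = ext0 (M *\<^sub>v w) $ i" .
qed (use M w in \<open>auto simp: ext0_def\<close>)

lemma Amat_Aconn:
  assumes v: "v \<in> carrier_vec (n+1)"
  shows "Amat (Suc n) *\<^sub>v (Aconn n *\<^sub>v v) = ext0 (Amat n *\<^sub>v v)"
proof -
  have cA: "oplus_id (Amat n) 1 \<in> carrier_mat (n+2) (n+2)" using oplus_carrier[OF Amat_carrier[of n], of 1] by simp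
  have ce: "ext0 v \<in> carrier_vec (n+2)" using ext0_carrier[OF v] by simp
  have "Amat (Suc n) *\<^sub>v (Aconn n *\<^sub>v v) = (oplus_id (Amat n) 1 * Inv n) *\<^sub>v (Abidiag n *\<^sub>v ext0 v)"
    unfolding Amat_Suc Aconn_ext0[OF v] ..
  also have "\<dots> = oplus_id (Amat n) 1 *\<^sub>v ((Inv n * Abidiag n) *\<^sub>v ext0 v)"
    using cA ce Inv_carrier[of n] Abidiag_carrier[of n]
    by (simp add: assoc_mult_mat_vec[of _ "n+2" "n+2" _ "n+2"])
  also have "\<dots> = oplus_id (Amat n) 1 *\<^sub>v ext0 v" using Inv_Ab[of n] ce by simp
  also have "\<dots> = ext0 (Amat n *\<^sub>v v)" by (rule oplus_ext0[OF Amat_carrier v])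
  finally show ?thesis .
qed

lemma Phi_Aconn: "v \<in> carrier_vec (n+1) \<Longrightarrow> Phi (n+1) (Aconn n *\<^sub>v v) = Phi n v"
  unfolding Phi_def using Amat_Aconn vec_to_seq_ext0 by simp

lemma Aconn_carrier: "v \<in> carrier_vec (n+1) \<Longrightarrow> Aconn n *\<^sub>v v \<in> carrier_vec (n+2)"
proof -
  assume v: "v \<in> carrier_vec (n+1)"
  have "Aconn n \<in> carrier_mat (n+2) (n+1)" by (simp add: Aconn_def)
  then show ?thesis using v by (rule mult_mat_vec_carrier)
qed

lemma push_same[simp]: "push n n v = v" by (simp add: push_def)

lemma push_Suc: "n \<le> m \<Longrightarrow> push n (Suc m) v = Aconn m *\<^sub>v push n m v"
  by (simp add: push_def)

lemma push_props:
  assumes "n \<le> m" and "v \<in> carrier_vec (n+1)"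
  shows "push n m v \<in> carrier_vec (m+1) \<and> Phi m (push n m v) = Phi n v"
  using assms
proof (induction m rule: dec_induct)
  case base then show ?case by simp
next
  case (step m)
  then show ?case using push_Suc[OF step.hyps(1)] Aconn_carrier Phi_Aconn by simp
qed

lemma vec_to_seq_inj: "a \<in> carrier_vec d \<Longrightarrow> b \<in> carrier_vec d \<Longrightarrow> vec_to_seq a = vec_to_seq b \<Longrightarrow> a = b"
proof -
  assume a: "a \<in> carrier_vec d" and b: "b \<in> carrier_vec d" and e: "vec_to_seq a = vec_to_seq b"
  show "a = b"
  proof (rule eq_vecI)
    fix i assume "i < dim_vec b"
    then show "a $ i = b $ i" using fun_cong[OF e, of i] a b by (simp add: vec_to_seq_def)
  qed (use a b in auto)
qed

lemma Phi_inj: "v \<in> carrier_vec (n+1) \<Longrightarrow> w \<in> carrier_vec (n+1) \<Longrightarrow> Phi n v = Phi n w \<Longrightarrow> v = w"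
  unfolding Phi_def by (metis Amat_carrier BA_vec mult_mat_vec_carrier vec_to_seq_inj)

lemma Grel_iff: "((n,v),(m,w)) \<in> Grel \<longleftrightarrow> (n,v) \<in> Glevels \<and> (m,w) \<in> Glevels \<and> Phi n v = Phi m w"
proof
  assume "((n,v),(m,w)) \<in> Grel"
  then obtain k where L: "(n,v) \<in> Glevels" "(m,w) \<in> Glevels" and k: "k \<ge> max n m" "push n k v = push m k w"
    unfolding Grel_def by auto
  have "Phi n v = Phi k (push n k v)" using push_props[of n k v] k L by (simp add: Glevels_def)
  also have "\<dots> = Phi m w" using push_props[of m k w] k L by (simp add: Glevels_def)
  finally show "(n,v) \<in> Glevels \<and> (m,w) \<in> Glevels \<and> Phi n v = Phi m w" using L by simp
next
  assume H: "(n,v) \<in> Glevels \<and> (m,w) \<in> Glevels \<and> Phi n v = Phi m w"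
  define k where "k = max n m"
  have a: "push n k v \<in> carrier_vec (k+1) \<and> Phi k (push n k v) = Phi n v"
    using push_props[of n k v] H by (simp add: Glevels_def k_def)
  have b: "push m k w \<in> carrier_vec (k+1) \<and> Phi k (push m k w) = Phi m w"
    using push_props[of m k w] H by (simp add: Glevels_def k_def)
  have "push n k v = push m k w" using a b H Phi_inj by metis
  then have "\<exists>k' \<ge> max n m. push n k' v = push m k' w" unfolding k_def by blast
  then show "((n,v),(m,w)) \<in> Grel" using H unfolding Grel_def by simp
qed

definition PhiP :: "nat \<times> int vec \<Rightarrow> nat \<Rightarrow> int" where "PhiP p = Phi (fst p) (snd p)"

lemma Gcls_eq: "(n,v) \<in> Glevels \<Longrightarrow> Gcls n v = {p \<in> Glevels. PhiP p = Phi n v}"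
  unfolding Gcls_def PhiP_def using Grel_iff by auto

lemma Phi_lim_cls: assumes "(n,v) \<in> Glevels" shows "Phi_lim (Gcls n v) = Phi n v"
  unfolding Phi_lim_def
proof (rule the_equality)
  show "\<forall>(m, w)\<in>Gcls n v. Phi m w = Phi n v" using Gcls_eq[OF assms] by (auto simp: PhiP_def)
next
  fix \<beta> assume "\<forall>(m, w)\<in>Gcls n v. Phi m w = \<beta>"
  moreover have "(n,v) \<in> Gcls n v" using Gcls_eq[OF assms] assms by (simp add: PhiP_def)
  ultimately show "\<beta> = Phi n v" by auto
qed

lemma Gcarrier_iff: "x \<in> Gcarrier \<longleftrightarrow> (\<exists>n v. (n,v) \<in> Glevels \<and> x = Gcls n v)"
  unfolding Gcarrier_def quotient_def Gcls_def by auto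


lemma seq_repr: "\<forall>i>n. \<beta> i = 0 \<Longrightarrow> vec_to_seq (vec (n+1) \<beta>) = \<beta>"
proof (rule ext)
  fix i assume "\<forall>i>n. \<beta> i = 0"
  then show "vec_to_seq (vec (n+1) \<beta>) i = \<beta> i" by (cases "i < n+1") (auto simp: vec_to_seq_def)
qed

lemma Phi_Bm: "\<forall>i>n. \<beta> i = 0 \<Longrightarrow> Phi n (Bm n *\<^sub>v vec (n+1) \<beta>) = \<beta>"
proof -
  assume z: "\<forall>i>n. \<beta> i = 0"
  have that: "vec (n+1) \<beta> \<in> carrier_vec (n+1)" by simp
  show ?thesis unfolding Phi_def AB_vec[OF that] using seq_repr[OF z] by simp
qed

lemma Bm_vec_carrier: "Bm n *\<^sub>v u \<in> carrier_vec (n+1)"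
proof -
  show ?thesis by (rule carrier_vecI) simp
qed

lemma Phi_support: "v \<in> carrier_vec (n+1) \<Longrightarrow> i > n \<Longrightarrow> Phi n v i = 0"
  by (simp add: Phi_def vec_to_seq_def)

lemma Phi_entry: "v \<in> carrier_vec (n+1) \<Longrightarrow> i \<le> n \<Longrightarrow> Phi n v i = (Amat n *\<^sub>v v) $ i"
  by (simp add: Phi_def vec_to_seq_def)

lemma Phi_Zinf: "v \<in> carrier_vec (n+1) \<Longrightarrow> Phi n v \<in> Zinf"
proof -
  assume v: "v \<in> carrier_vec (n+1)"
  have "{i. Phi n v i \<noteq> 0} \<subseteq> {..n}" using Phi_support[OF v] by (auto simp: not_less[symmetric])
  then show ?thesis unfolding Zinf_def using finite_subset by blast
qed

lemma vec_to_seq_add: "a \<in> carrier_vec d \<Longrightarrow> b \<in> carrier_vec d \<Longrightarrow> vec_to_seq (a + b) = (\<lambda>i. vec_to_seq a i + vec_to_seq b i)"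
  by (rule ext) (auto simp: vec_to_seq_def)

lemma Phi_add: "a \<in> carrier_vec (n+1) \<Longrightarrow> b \<in> carrier_vec (n+1) \<Longrightarrow> Phi n (a + b) = (\<lambda>i. Phi n a i + Phi n b i)"
proof -
  assume a: "a \<in> carrier_vec (n+1)" and b: "b \<in> carrier_vec (n+1)"
  have ca: "Amat n *\<^sub>v a \<in> carrier_vec (n+1)" by (rule mult_mat_vec_carrier[OF Amat_carrier a])
  have cb: "Amat n *\<^sub>v b \<in> carrier_vec (n+1)" by (rule mult_mat_vec_carrier[OF Amat_carrier b])
  show ?thesis unfolding Phi_def mult_add_distrib_mat_vec[OF Amat_carrier a b] vec_to_seq_add[OF ca cb] ..
qed

lemma part_bij: "bij_betw Phi_lim Gcarrier Zinf"
proof (rule bij_betwI')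
  fix x y assume "x \<in> Gcarrier" "y \<in> Gcarrier"
  then obtain n v m w where L: "(n,v) \<in> Glevels" "(m,w) \<in> Glevels" and xy: "x = Gcls n v" "y = Gcls m w"
    unfolding Gcarrier_iff by blast
  have px: "Phi_lim x = Phi n v" using xy(1) Phi_lim_cls[OF L(1)] by simp
  have py: "Phi_lim y = Phi m w" using xy(2) Phi_lim_cls[OF L(2)] by simp
  have sx: "x = {p \<in> Glevels. PhiP p = Phi n v}" using xy(1) Gcls_eq[OF L(1)] by simp
  have sy: "y = {p \<in> Glevels. PhiP p = Phi m w}" using xy(2) Gcls_eq[OF L(2)] by simp
  show "(Phi_lim x = Phi_lim y) = (x = y)"
  proof
    assume "Phi_lim x = Phi_lim y"
    then have "Phi n v = Phi m w" using px py by simp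
    then show "x = y" using sx sy by simp
  next
    assume "x = y" then show "Phi_lim x = Phi_lim y" by simp
  qed
next
  fix x assume "x \<in> Gcarrier"
  then obtain n v where L: "(n,v) \<in> Glevels" and xy: "x = Gcls n v"
    unfolding Gcarrier_iff by blast
  have v: "v \<in> carrier_vec (n+1)" using L by (simp add: Glevels_def)
  show "Phi_lim x \<in> Zinf" using xy Phi_lim_cls[OF L] Phi_Zinf[OF v] by simp
next
  fix \<beta> assume "\<beta> \<in> Zinf"
  then have "finite {i. \<beta> i \<noteq> 0}" by (simp add: Zinf_def)
  then obtain M where M: "\<forall>i\<in>{i. \<beta> i \<noteq> 0}. i \<le> M" using finite_nat_set_iff_bounded_le by blast
  define n where "n = max 1 M"
  have z: "\<forall>i>n. \<beta> i = 0"
  proof (intro allI impI)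
    fix i assume "i > n"
    then have "\<not> i \<le> M" unfolding n_def by simp
    then show "\<beta> i = 0" using M by blast
  qed
  define v where "v = Bm n *\<^sub>v vec (n+1) \<beta>"
  have n1: "n \<ge> 1" unfolding n_def by simp
  have L: "(n,v) \<in> Glevels" unfolding Glevels_def v_def using Bm_vec_carrier[of n] n1 by simp
  show "\<exists>x\<in>Gcarrier. \<beta> = Phi_lim x"
  proof (intro bexI)
    show "Gcls n v \<in> Gcarrier" using L Gcarrier_iff by blast
    show "\<beta> = Phi_lim (Gcls n v)" using Phi_lim_cls[OF L] Phi_Bm[OF z] v_def by simp
  qed
qed

lemma part_add: assumes x: "x \<in> Gcarrier" and y: "y \<in> Gcarrier"
  shows "Phi_lim (Gadd x y) = (\<lambda>i. Phi_lim x i + Phi_lim y i)"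
proof -
  obtain n v where L: "(n,v) \<in> Glevels" and xe: "x = Gcls n v"
    using x unfolding Gcarrier_iff by blast
  obtain m w where L2: "(m,w) \<in> Glevels" and ye: "y = Gcls m w"
    using y unfolding Gcarrier_iff by blast
  have "(n,v) \<in> x" using xe Gcls_eq[OF L] L by (simp add: PhiP_def)
  then have px: "(SOME p. p \<in> x) \<in> x" by (rule someI)
  obtain n' v' where pe: "(SOME p. p \<in> x) = (n',v')" by fastforce
  have "(m,w) \<in> y" using ye Gcls_eq[OF L2] L2 by (simp add: PhiP_def)
  then have py: "(SOME p. p \<in> y) \<in> y" by (rule someI)
  obtain m' w' where qe: "(SOME p. p \<in> y) = (m',w')" by fastforce
  have P1: "(n',v') \<in> Glevels" "Phi n' v' = Phi n v"
    using px pe xe Gcls_eq[OF L] by (auto simp: PhiP_def)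
  have P2: "(m',w') \<in> Glevels" "Phi m' w' = Phi m w"
    using py qe ye Gcls_eq[OF L2] by (auto simp: PhiP_def)
  define k where "k = max n' m'"
  have a: "push n' k v' \<in> carrier_vec (k+1) \<and> Phi k (push n' k v') = Phi n' v'"
    using push_props[of n' k v'] P1 by (simp add: Glevels_def k_def)
  have b: "push m' k w' \<in> carrier_vec (k+1) \<and> Phi k (push m' k w') = Phi m' w'"
    using push_props[of m' k w'] P2 by (simp add: Glevels_def k_def)
  have g: "Gadd x y = Gcls k (push n' k v' + push m' k w')"
    unfolding Gadd_def Let_def pe qe k_def by simp
  have Lk: "(k, push n' k v' + push m' k w') \<in> Glevels"
    using a b P1 by (auto simp: Glevels_def k_def)
  show ?thesis
    unfolding g Phi_lim_cls[OF Lk] Phi_add[OF conjunct1[OF a] conjunct1[OF b]]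
    using a b P1 P2 xe ye Phi_lim_cls[OF L] Phi_lim_cls[OF L2] by simp
qed

lemma binom_eq: "binom_vec n = Bm n *\<^sub>v vec (n+1) e1"
proof (rule eq_vecI)
  fix k assume "k < dim_vec (Bm n *\<^sub>v vec (n + 1) e1)"
  then have k: "k \<le> n" by simp
  have "(Bm n *\<^sub>v vec (n + 1) e1) $ k = (\<Sum>l = 0..k. int ((n - l) choose (k - l)) * vec (n + 1) e1 $ l)"
    by (rule Bm_vec_entry[OF k]) simp
  also have "\<dots> = (\<Sum>l = 0..k. (if l = 0 then int (n choose k) else 0))"
    by (rule sum.cong) (use k in \<open>auto simp: e1_def\<close>)
  also have "\<dots> = int (n choose k)" by (simp add: sum.delta)
  finally show "binom_vec n $ k = (Bm n *\<^sub>v vec (n + 1) e1) $ k" using k by (simp add: binom_vec_def)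
qed (simp add: binom_vec_def)

lemma part_binom: "n \<ge> 1 \<Longrightarrow> Phi_lim (Gcls n (binom_vec n)) = e1"
proof -
  assume n: "n \<ge> 1"
  have L: "(n, binom_vec n) \<in> Glevels" using n by (simp add: Glevels_def binom_vec_def)
  have z: "\<forall>i>n. e1 i = 0" by (simp add: e1_def)
  have "Phi_lim (Gcls n (binom_vec n)) = Phi n (binom_vec n)" by (rule Phi_lim_cls[OF L])
  also have "\<dots> = e1" unfolding binom_eq by (rule Phi_Bm[OF z])
  finally show ?thesis .
qed

lemma Ppos_sum:
  assumes v: "v \<in> carrier_vec (n+1)" and k: "k \<le> n"
  shows "(\<Sum>l = 0..k. int ((n - l) choose (k - l)) * Phi n v l) = v $ k"
proof -
  have "(\<Sum>l = 0..k. int ((n - l) choose (k - l)) * Phi n v l) = (\<Sum>l = 0..k. int ((n - l) choose (k - l)) * (Amat n *\<^sub>v v) $ l)"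
    by (rule sum.cong) (use k v in \<open>auto simp: Phi_entry\<close>)
  also have "\<dots> = (Bm n *\<^sub>v (Amat n *\<^sub>v v)) $ k"
    by (rule Bm_vec_entry[OF k, symmetric]) (rule mult_mat_vec_carrier[OF Amat_carrier v])
  also have "\<dots> = v $ k" using BA_vec[OF v] by simp
  finally show ?thesis .
qed

lemma part_pos: "Phi_lim ` Gpos = (\<Union>n \<in> {1..}. Ppos n)"
proof
  show "Phi_lim ` Gpos \<subseteq> (\<Union>n \<in> {1..}. Ppos n)"
  proof
    fix \<beta> assume "\<beta> \<in> Phi_lim ` Gpos"
    then obtain n v where n: "n \<ge> 1" and v: "v \<in> carrier_vec (n+1)" and pos: "\<forall>i < n+1. v $ i \<ge> 0"
      and b: "\<beta> = Phi_lim (Gcls n v)"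
      unfolding Gpos_def by blast
    have L: "(n,v) \<in> Glevels" using n v by (simp add: Glevels_def)
    have b2: "\<beta> = Phi n v" using b Phi_lim_cls[OF L] by simp
    have "\<beta> \<in> Ppos n" unfolding Ppos_def
      using b2 Phi_support[OF v] Ppos_sum[OF v] pos by auto
    then show "\<beta> \<in> (\<Union>n \<in> {1..}. Ppos n)" using n by auto
  qed
next
  show "(\<Union>n \<in> {1..}. Ppos n) \<subseteq> Phi_lim ` Gpos"
  proof
    fix \<beta> assume "\<beta> \<in> (\<Union>n \<in> {1..}. Ppos n)"
    then obtain n where n: "n \<ge> 1" and P: "\<beta> \<in> Ppos n" by auto
    have z: "\<forall>i>n. \<beta> i = 0" and s: "\<forall>k \<le> n. (\<Sum>l = 0..k. int ((n - l) choose (k - l)) * \<beta> l) \<ge> 0"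
      using P unfolding Ppos_def by auto
    define v where "v = Bm n *\<^sub>v vec (n+1) \<beta>"
    have v: "v \<in> carrier_vec (n+1)" unfolding v_def by (rule Bm_vec_carrier)
    have L: "(n,v) \<in> Glevels" using n v by (simp add: Glevels_def)
    have pv: "Phi n v = \<beta>" unfolding v_def by (rule Phi_Bm[OF z])
    have pos: "\<forall>i < n+1. v $ i \<ge> 0"
      using Ppos_sum[OF v] pv s by auto
    have "Gcls n v \<in> Gpos" unfolding Gpos_def using n v pos by blast
    moreover have "\<beta> = Phi_lim (Gcls n v)" using Phi_lim_cls[OF L] pv by simp
    ultimately show "\<beta> \<in> Phi_lim ` Gpos" by blast
  qed
qed

theorem mainTheorem11:
  shows "(\<forall>n \<ge> 1. \<forall>v \<in> carrier_vec (n+1). Phi (n+1) (Aconn n *\<^sub>v v) = Phi n v)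
       \<and> bij_betw Phi_lim Gcarrier Zinf
       \<and> (\<forall>x \<in> Gcarrier. \<forall>y \<in> Gcarrier. Phi_lim (Gadd x y) = (\<lambda>i. Phi_lim x i + Phi_lim y i))
       \<and> (\<forall>n \<ge> 1. Phi_lim (Gcls n (binom_vec n)) = e1)
       \<and> Phi_lim ` Gpos = (\<Union>n \<in> {1..}. Ppos n)"
proof (intro conjI)
  show "\<forall>n \<ge> 1. \<forall>v \<in> carrier_vec (n+1). Phi (n+1) (Aconn n *\<^sub>v v) = Phi n v"
    using Phi_Aconn by blast
  show "bij_betw Phi_lim Gcarrier Zinf" by (rule part_bij)
  show "\<forall>x \<in> Gcarrier. \<forall>y \<in> Gcarrier. Phi_lim (Gadd x y) = (\<lambda>i. Phi_lim x i + Phi_lim y i)"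
    using part_add by blast
  show "\<forall>n \<ge> 1. Phi_lim (Gcls n (binom_vec n)) = e1" using part_binom by blast
  show "Phi_lim ` Gpos = (\<Union>n \<in> {1..}. Ppos n)" by (rule part_pos)
qed

end
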